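(* Let $S,U$ be standard Borel, $\gamma\in(0,1)$, and consider two series-wired modules: module 1 with input state space $S$, output $U$, and module 2 with input $U$, output $S$, each with fixed policy, expected scalar one-step reward $r_i(x,a)$ and transition kernel $P^{(i)}(\cdot\mid x,a)$, inducing micro-step Bellman transformers $T_1:\mathcal{B}(U)\to\mathcal{B}(S)$, $T_2:\mathcal{B}(S)\to\mathcal{B}(U)$, $(T_iW)(x)=\int_A[r_i(x,a)+\gamma\int W\,dP^{(i)}(\cdot\mid x,a)]\pi_i(da\mid x)$; let $\widetilde T_i$ be defined likewise from perturbed $\tilde r_i,\widetilde P^{(i)}$ with the same policies. Assume all (original and perturbed) scalar rewards are bounded by $R_{\max}$, set $V_{\max}=R_{\max}/(1-\gamma)$, and assume $\sup_{x,a}|\tilde r_i(x,a)-r_i(x,a)|\le\varepsilon_r^{(i)}$ and $\sup_{x,a}d_{\mathrm{TV}}(\widetilde P^{(i)}(\cdot\mid x,a),P^{(i)}(\cdot\mid x,a))\le\varepsilon_P^{(i)}$. Let $\epsilon_i:=\varepsilon_r^{(i)}+\gamma V_{\max}\varepsilon_P^{(i)}$, and let $V^\pi,\widetilde V^\pi$ be the unique fixed points in $\mathcal{B}(S)$ of $T_1\circ T_2$ and $\widetilde T_1\circ\widetilde T_2$. Then \[\|\widetilde V^\pi-V^\pi\|_\infty\le\frac{\epsilon_1+\gamma\epsilon_2}{1-\gamma^2}.\]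
   Context: $\mathcal{B}(X)$ denotes bounded measurable real functions on $X$ with sup norm. $d_{\mathrm{TV}}(\mu,\nu):=\sup_{\|f\|_\infty\le1}|\int f\,d\mu-\int f\,d\nu|$. *)

theory Defs
  imports "HOL-Probability.Probability"
begin

definition bdd_meas :: "'a measure \<Rightarrow> ('a \<Rightarrow> real) set" where
  "bdd_meas M = {f. f \<in> borel_measurable M \<and> bounded (f ` space M)}"

definition sup_norm :: "'a measure \<Rightarrow> ('a \<Rightarrow> real) \<Rightarrow> real" where
  "sup_norm M f = (SUP x\<in>space M. \<bar>f x\<bar>)"

definition dTV :: "'a measure \<Rightarrow> 'a measure \<Rightarrow> real" where
  "dTV \<mu> \<nu> = (SUP f \<in> {f. f \<in> borel_measurable \<mu> \<and> (\<forall>x\<in>space \<mu>. \<bar>f x\<bar> \<le> 1)}.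
      \<bar>(\<integral>y. f y \<partial>\<mu>) - (\<integral>y. f y \<partial>\<nu>)\<bar>)"

definition bellman :: "real \<Rightarrow> ('x \<Rightarrow> 'a measure) \<Rightarrow> ('x \<Rightarrow> 'a \<Rightarrow> real)
    \<Rightarrow> ('x \<Rightarrow> 'a \<Rightarrow> 'y measure) \<Rightarrow> ('y \<Rightarrow> real) \<Rightarrow> 'x \<Rightarrow> real" where
  "bellman \<gamma> \<pi> r P W x = (\<integral>a. (r x a + \<gamma> * (\<integral>y. W y \<partial>(P x a))) \<partial>(\<pi> x))"

end

theory Submission imports Defs begin

lemma sup_upper:
  fixes f :: "'s \<Rightarrow> real"
  assumes "bounded (range f)"
  shows "\<bar>f x\<bar> \<le> (SUP y. \<bar>f y\<bar>)"
proof -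
  obtain b where b: "\<forall>y\<in>range f. norm y \<le> b" using assms bounded_iff by metis
  have "bdd_above (range (\<lambda>y. \<bar>f y\<bar>))" using b by (auto intro!: bdd_aboveI[of _ b])
  then show ?thesis by (rule cSUP_upper[rotated]) auto
qed

lemma sup_fix:
  fixes f :: "'s \<Rightarrow> real"
  assumes "bounded (range f)" "0 \<le> k" "k < 1"
    and h: "\<And>x. \<bar>f x\<bar> \<le> c + k * (SUP y. \<bar>f y\<bar>)"
  shows "(SUP y. \<bar>f y\<bar>) \<le> c / (1 - k)"
proof -
  have "(SUP y. \<bar>f y\<bar>) \<le> c + k * (SUP y. \<bar>f y\<bar>)"
    by (rule cSUP_least) (auto intro: h)
  then have "(1 - k) * (SUP y. \<bar>f y\<bar>) \<le> c" by (simp add: algebra_simps)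
  then show ?thesis using assms(3) by (simp add: field_simps)
qed

lemma kernel_facts:
  assumes "P \<in> M \<rightarrow>\<^sub>M prob_algebra N" "x \<in> space M"
  shows "prob_space (P x)" "sets (P x) = sets N" "space (P x) = space N"
  using measurable_space[OF assms] by (auto simp: space_prob_algebra intro!: sets_eq_imp_space_eq)

lemma abs_int_le:
  fixes g :: "'a \<Rightarrow> real"
  assumes "prob_space M" "g \<in> borel_measurable M" "\<And>a. a \<in> space M \<Longrightarrow> \<bar>g a\<bar> \<le> c"
  shows "\<bar>\<integral>a. g a \<partial>M\<bar> \<le> c"
proof -
  interpret prob_space M by fact
  have i: "integrable M g"
    by (rule integrable_const_bound[where B=c]) (auto intro!: AE_I2 assms)
  have "\<bar>\<integral>a. g a \<partial>M\<bar> \<le> (\<integral>a. \<bar>g a\<bar> \<partial>M)" by simp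
  also have "\<dots> \<le> (\<integral>a. c \<partial>M)"
    by (rule integral_mono) (auto intro: i assms)
  also have "\<dots> = c" by (simp add: prob_space)
  finally show ?thesis .
qed

lemma int2_meas:
  fixes f :: "'x \<Rightarrow> 'y \<Rightarrow> real"
  assumes f[measurable]: "(\<lambda>(x,y). f x y) \<in> borel_measurable (M \<Otimes>\<^sub>M N)"
    and L: "L \<in> M \<rightarrow>\<^sub>M prob_algebra N"
    and bnd: "\<And>x y. x \<in> space M \<Longrightarrow> y \<in> space N \<Longrightarrow> \<bar>f x y\<bar> \<le> B"
  shows "(\<lambda>x. \<integral>y. f x y \<partial>L x) \<in> borel_measurable M"
proof -
  have L'[measurable]: "L \<in> M \<rightarrow>\<^sub>M subprob_algebra N" using L by (rule measurable_prob_algebraD)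
  have "(\<lambda>x. enn2real (\<integral>\<^sup>+y. ennreal (f x y) \<partial>L x) - enn2real (\<integral>\<^sup>+y. ennreal (- f x y) \<partial>L x))
     \<in> borel_measurable M"
  proof -
    have "(\<lambda>x. \<integral>\<^sup>+y. ennreal (f x y) \<partial>L x) \<in> borel_measurable M"
      by (rule nn_integral_measurable_subprob_algebra2[where N=N]) (auto intro: L')
    moreover have "(\<lambda>x. \<integral>\<^sup>+y. ennreal (- f x y) \<partial>L x) \<in> borel_measurable M"
      by (rule nn_integral_measurable_subprob_algebra2[where N=N]) (auto intro: L')
    ultimately show ?thesis by measurable
  qed
  moreover have "\<And>x. x \<in> space M \<Longrightarrow> (\<integral>y. f x y \<partial>L x) =
     enn2real (\<integral>\<^sup>+y. ennreal (f x y) \<partial>L x) - enn2real (\<integral>\<^sup>+y. ennreal (- f x y) \<partial>L x)"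
  proof -
    fix x assume x: "x \<in> space M"
    note kf = kernel_facts[OF L x]
    have fm: "f x \<in> borel_measurable N"
      using measurable_compose[OF measurable_Pair1'[OF x] f] by simp
    interpret p: prob_space "L x" by (rule kf(1))
    have "integrable (L x) (f x)"
      using kf fm bnd[OF x]
      by (intro p.integrable_const_bound[where B=B]) (auto intro!: AE_I2 cong: measurable_cong_sets)
    then show "?thesis x" by (rule real_lebesgue_integral_def)
  qed
  ultimately show ?thesis using measurable_cong by (smt (verit))
qed

lemma tv_bound:
  fixes W :: "'y \<Rightarrow> real"
  assumes pm: "prob_space \<mu>" and pn: "prob_space \<nu>" and se: "sets \<mu> = sets \<nu>"
    and W: "W \<in> borel_measurable \<mu>" and Wb: "\<And>y. \<bar>W y\<bar> \<le> B"
  shows "\<bar>(\<integral>y. W y \<partial>\<mu>) - (\<integral>y. W y \<partial>\<nu>)\<bar> \<le> B * dTV \<mu> \<nu>"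
proof (cases "B = 0")
  case True
  then have "W = (\<lambda>_. 0)" using Wb by (auto intro!: ext)
  then show ?thesis using True by simp
next
  case False
  then have Bp: "B > 0" using Wb[of undefined] by linarith
  let ?F = "{f::'y\<Rightarrow>real. f \<in> borel_measurable \<mu> \<and> (\<forall>x\<in>space \<mu>. \<bar>f x\<bar> \<le> 1)}"
  let ?g = "\<lambda>f. \<bar>(\<integral>y. f y \<partial>\<mu>) - (\<integral>y. f y \<partial>\<nu>)\<bar>"
  have sp: "space \<mu> = space \<nu>" using se by (rule sets_eq_imp_space_eq)
  have bdd: "bdd_above (?g ` ?F)"
  proof (rule bdd_aboveI[where M="2::real"])
    fix z assume "z \<in> ?g ` ?F"
    then obtain f where f: "f \<in> ?F" and z: "z = ?g f" by blast
    have fn: "f \<in> borel_measurable \<nu>" using f se by (auto cong: measurable_cong_sets)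
    have "\<bar>\<integral>y. f y \<partial>\<mu>\<bar> \<le> 1" using f by (intro abs_int_le[OF pm]) auto
    moreover have "\<bar>\<integral>y. f y \<partial>\<nu>\<bar> \<le> 1" using f fn sp by (intro abs_int_le[OF pn]) auto
    ultimately show "z \<le> 2" using z by linarith
  qed
  have mem: "(\<lambda>y. W y / B) \<in> ?F" using W Wb Bp by (auto simp: divide_le_eq_1)
  have "?g (\<lambda>y. W y / B) \<le> dTV \<mu> \<nu>"
    unfolding dTV_def by (rule cSUP_upper[OF mem bdd])
  moreover have "?g (\<lambda>y. W y / B) = \<bar>(\<integral>y. W y \<partial>\<mu>) - (\<integral>y. W y \<partial>\<nu>)\<bar> / B"
    using Bp by (simp add: diff_divide_distrib[symmetric])
  ultimately show ?thesis using Bp by (simp add: divide_le_eq mult.commute)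
qed

lemma integrand:
  fixes W :: "'y::topological_space \<Rightarrow> real" and P :: "'x::topological_space \<Rightarrow> 'a \<Rightarrow> 'y measure"
  assumes P: "(\<lambda>(x,a). P x a) \<in> borel \<Otimes>\<^sub>M A \<rightarrow>\<^sub>M prob_algebra borel"
    and r: "(\<lambda>(x,a). r x a) \<in> borel_measurable (borel \<Otimes>\<^sub>M A)"
    and W: "W \<in> borel_measurable borel" and Wb: "\<And>y. \<bar>W y\<bar> \<le> B"
  shows "(\<lambda>(x,a). r x a + \<gamma> * (\<integral>y. W y \<partial>P x a)) \<in> borel_measurable (borel \<Otimes>\<^sub>M A)"
    and "a \<in> space A \<Longrightarrow> \<bar>\<integral>y. W y \<partial>P x a\<bar> \<le> B"
    and "a \<in> space A \<Longrightarrow> prob_space (P x a)"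
    and "a \<in> space A \<Longrightarrow> sets (P x a) = sets borel"
proof -
  have g: "(\<lambda>z. \<integral>y. W y \<partial>(case z of (x,a) \<Rightarrow> P x a)) \<in> borel_measurable (borel \<Otimes>\<^sub>M A)"
    by (rule measurable_compose[OF measurable_prob_algebraD[OF P] integral_measurable_subprob_algebra[OF W]])
  have g': "(\<lambda>(x,a). \<integral>y. W y \<partial>P x a) \<in> borel_measurable (borel \<Otimes>\<^sub>M A)"
    using g by (simp add: case_prod_beta')
  have "(\<lambda>z. (case z of (x,a) \<Rightarrow> r x a) + \<gamma> * (case z of (x,a) \<Rightarrow> \<integral>y. W y \<partial>P x a)) \<in> borel_measurable (borel \<Otimes>\<^sub>M A)"
    using r g' by measurable
  then show "(\<lambda>(x,a). r x a + \<gamma> * (\<integral>y. W y \<partial>P x a)) \<in> borel_measurable (borel \<Otimes>\<^sub>M A)"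
    by (simp add: case_prod_beta')
  assume a: "a \<in> space A"
  have xa: "(x,a) \<in> space (borel \<Otimes>\<^sub>M A)" using a by (simp add: space_pair_measure)
  note kf = kernel_facts[OF P xa]
  show "prob_space (P x a)" using kf by simp
  show "sets (P x a) = sets borel" using kf by simp
  show "\<bar>\<integral>y. W y \<partial>P x a\<bar> \<le> B"
    using kf W Wb by (intro abs_int_le) (auto cong: measurable_cong_sets)
qed

lemma int_bdd:
  fixes g :: "'a \<Rightarrow> real"
  assumes "prob_space M" "g \<in> borel_measurable M" "\<And>a. a \<in> space M \<Longrightarrow> \<bar>g a\<bar> \<le> c"
  shows "integrable M g"
proof -
  interpret prob_space M by fact
  show ?thesis by (rule integrable_const_bound[where B=c]) (auto intro!: AE_I2 assms)
qed

lemma sec_meas: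
  fixes f :: "'x::topological_space \<Rightarrow> 'a \<Rightarrow> real"
  assumes f: "(\<lambda>(x,a). f x a) \<in> borel_measurable (borel \<Otimes>\<^sub>M A)"
    and pol: "\<pi> \<in> borel \<rightarrow>\<^sub>M prob_algebra A"
  shows "f x \<in> borel_measurable (\<pi> x)"
proof -
  have "f x \<in> borel_measurable A"
    using measurable_compose[OF measurable_Pair1'[of x borel] f] by simp
  then show ?thesis using kernel_facts(2)[OF pol, of x] by (simp cong: measurable_cong_sets)
qed

lemma point_bd:
  fixes W :: "'y::topological_space \<Rightarrow> real" and P :: "'x::topological_space \<Rightarrow> 'a \<Rightarrow> 'y measure"
  assumes P: "(\<lambda>(x,a). P x a) \<in> borel \<Otimes>\<^sub>M A \<rightarrow>\<^sub>M prob_algebra borel"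
    and r: "(\<lambda>(x,a). r x a) \<in> borel_measurable (borel \<Otimes>\<^sub>M A)"
    and rb: "\<And>x a. a \<in> space A \<Longrightarrow> \<bar>r x a\<bar> \<le> R"
    and W: "W \<in> borel_measurable borel" and Wb: "\<And>y. \<bar>W y\<bar> \<le> B"
    and g: "0 \<le> \<gamma>" and a: "a \<in> space A"
  shows "\<bar>r x a + \<gamma> * (\<integral>y. W y \<partial>P x a)\<bar> \<le> R + \<gamma> * B"
proof -
  have "\<bar>\<integral>y. W y \<partial>P x a\<bar> \<le> B" by (rule integrand(2)[OF P r W Wb a])
  then have "\<gamma> * \<bar>\<integral>y. W y \<partial>P x a\<bar> \<le> \<gamma> * B" using g by (rule mult_left_mono)
  moreover have "\<bar>r x a\<bar> \<le> R" using rb a .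
  ultimately show ?thesis using abs_triangle_ineq[of "r x a" "\<gamma> * (\<integral>y. W y \<partial>P x a)"]
    by (simp add: abs_mult g)
qed

lemma bell:
  fixes W :: "'y::topological_space \<Rightarrow> real" and P :: "'x::topological_space \<Rightarrow> 'a \<Rightarrow> 'y measure"
  assumes pol: "\<pi> \<in> borel \<rightarrow>\<^sub>M prob_algebra A"
    and P: "(\<lambda>(x,a). P x a) \<in> borel \<Otimes>\<^sub>M A \<rightarrow>\<^sub>M prob_algebra borel"
    and r: "(\<lambda>(x,a). r x a) \<in> borel_measurable (borel \<Otimes>\<^sub>M A)"
    and rb: "\<And>x a. a \<in> space A \<Longrightarrow> \<bar>r x a\<bar> \<le> R"
    and W: "W \<in> borel_measurable borel" and Wb: "\<And>y. \<bar>W y\<bar> \<le> B"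
    and g: "0 \<le> \<gamma>"
  shows "bellman \<gamma> \<pi> r P W \<in> borel_measurable borel"
    and "\<bar>bellman \<gamma> \<pi> r P W x\<bar> \<le> R + \<gamma> * B"
    and "integrable (\<pi> x) (\<lambda>a. r x a + \<gamma> * (\<integral>y. W y \<partial>P x a))"
    and "(\<lambda>a. r x a + \<gamma> * (\<integral>y. W y \<partial>P x a)) \<in> borel_measurable (\<pi> x)"
proof -
  note I = integrand(1)[OF P r W Wb, of \<gamma>]
  note kf = kernel_facts[OF pol, of x, simplified]
  show "bellman \<gamma> \<pi> r P W \<in> borel_measurable borel"
    unfolding bellman_def
    by (rule int2_meas[OF I pol, where B="R + \<gamma> * B"]) (rule point_bd[OF P r rb W Wb g], simp)
  show m: "(\<lambda>a. r x a + \<gamma> * (\<integral>y. W y \<partial>P x a)) \<in> borel_measurable (\<pi> x)"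
    using sec_meas[OF I pol, of x] by simp
  show "integrable (\<pi> x) (\<lambda>a. r x a + \<gamma> * (\<integral>y. W y \<partial>P x a))"
    using kf by (intro int_bdd[OF _ m, where c="R + \<gamma> * B"]) (auto intro: point_bd[OF P r rb W Wb g])
  show "\<bar>bellman \<gamma> \<pi> r P W x\<bar> \<le> R + \<gamma> * B"
    unfolding bellman_def
    using kf by (intro abs_int_le[OF _ m]) (auto intro: point_bd[OF P r rb W Wb g])
qed

lemma bell_lip:
  fixes W1 W2 :: "'y::topological_space \<Rightarrow> real" and P :: "'x::topological_space \<Rightarrow> 'a \<Rightarrow> 'y measure"
  assumes pol: "\<pi> \<in> borel \<rightarrow>\<^sub>M prob_algebra A"
    and P: "(\<lambda>(x,a). P x a) \<in> borel \<Otimes>\<^sub>M A \<rightarrow>\<^sub>M prob_algebra borel"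
    and r: "(\<lambda>(x,a). r x a) \<in> borel_measurable (borel \<Otimes>\<^sub>M A)"
    and rb: "\<And>x a. a \<in> space A \<Longrightarrow> \<bar>r x a\<bar> \<le> R"
    and W1: "W1 \<in> borel_measurable borel" and W1b: "\<And>y. \<bar>W1 y\<bar> \<le> B1"
    and W2: "W2 \<in> borel_measurable borel" and W2b: "\<And>y. \<bar>W2 y\<bar> \<le> B2"
    and D: "\<And>y. \<bar>W1 y - W2 y\<bar> \<le> D"
    and g: "0 \<le> \<gamma>"
  shows "\<bar>bellman \<gamma> \<pi> r P W1 x - bellman \<gamma> \<pi> r P W2 x\<bar> \<le> \<gamma> * D"
proof -
  note b1 = bell(3,4)[OF pol P r rb W1 W1b g, of x, OF asm_rl]
  note b2 = bell(3,4)[OF pol P r rb W2 W2b g, of x, OF asm_rl]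
  note kf = kernel_facts[OF pol, of x, simplified]
  have eq: "bellman \<gamma> \<pi> r P W1 x - bellman \<gamma> \<pi> r P W2 x =
     (\<integral>a. (r x a + \<gamma> * (\<integral>y. W1 y \<partial>P x a)) - (r x a + \<gamma> * (\<integral>y. W2 y \<partial>P x a)) \<partial>\<pi> x)"
    (is "_ = (\<integral>a. ?f1 a - ?f2 a \<partial>\<pi> x)")
    unfolding bellman_def by (rule Bochner_Integration.integral_diff[OF b1(1) b2(1), symmetric])
  have pt: "\<bar>(r x a + \<gamma> * (\<integral>y. W1 y \<partial>P x a)) - (r x a + \<gamma> * (\<integral>y. W2 y \<partial>P x a))\<bar> \<le> \<gamma> * D"
    if a: "a \<in> space A" for a
  proof -
    note ps = integrand(3,4)[OF P r W1 W1b a, of x]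
    have m1: "W1 \<in> borel_measurable (P x a)" using W1 ps(2) by (simp cong: measurable_cong_sets)
    have m2: "W2 \<in> borel_measurable (P x a)" using W2 ps(2) by (simp cong: measurable_cong_sets)
    have i1: "integrable (P x a) W1" by (rule int_bdd[OF ps(1) m1]) (rule W1b)
    have i2: "integrable (P x a) W2" by (rule int_bdd[OF ps(1) m2]) (rule W2b)
    have "(\<integral>y. W1 y \<partial>P x a) - (\<integral>y. W2 y \<partial>P x a) = (\<integral>y. W1 y - W2 y \<partial>P x a)"
      by (rule Bochner_Integration.integral_diff[OF i1 i2, symmetric])
    also have "\<bar>\<dots>\<bar> \<le> D" by (rule abs_int_le[OF ps(1)]) (use m1 m2 D in auto)
    finally have "\<bar>(\<integral>y. W1 y \<partial>P x a) - (\<integral>y. W2 y \<partial>P x a)\<bar> \<le> D" .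
    then have "\<gamma> * \<bar>(\<integral>y. W1 y \<partial>P x a) - (\<integral>y. W2 y \<partial>P x a)\<bar> \<le> \<gamma> * D" using g by (rule mult_left_mono)
    then show ?thesis by (simp add: abs_mult g right_diff_distrib[symmetric])
  qed
  have md: "(\<lambda>a. ?f1 a - ?f2 a) \<in> borel_measurable (\<pi> x)"
    using b1(2) b2(2) by (rule borel_measurable_diff)
  show ?thesis unfolding eq
    by (rule abs_int_le[OF kf(1) md]) (use pt kf in auto)
qed

lemma bell_pert:
  fixes W :: "'y::topological_space \<Rightarrow> real" and P P' :: "'x::topological_space \<Rightarrow> 'a \<Rightarrow> 'y measure"
  assumes pol: "\<pi> \<in> borel \<rightarrow>\<^sub>M prob_algebra A"
    and P: "(\<lambda>(x,a). P x a) \<in> borel \<Otimes>\<^sub>M A \<rightarrow>\<^sub>M prob_algebra borel"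
    and P': "(\<lambda>(x,a). P' x a) \<in> borel \<Otimes>\<^sub>M A \<rightarrow>\<^sub>M prob_algebra borel"
    and r: "(\<lambda>(x,a). r x a) \<in> borel_measurable (borel \<Otimes>\<^sub>M A)"
    and r': "(\<lambda>(x,a). r' x a) \<in> borel_measurable (borel \<Otimes>\<^sub>M A)"
    and rb: "\<And>x a. a \<in> space A \<Longrightarrow> \<bar>r x a\<bar> \<le> R"
    and rb': "\<And>x a. a \<in> space A \<Longrightarrow> \<bar>r' x a\<bar> \<le> R"
    and rp: "\<And>x a. a \<in> space A \<Longrightarrow> \<bar>r' x a - r x a\<bar> \<le> er"
    and Pp: "\<And>x a. a \<in> space A \<Longrightarrow> dTV (P' x a) (P x a) \<le> eP"
    and W: "W \<in> borel_measurable borel" and Wb: "\<And>y. \<bar>W y\<bar> \<le> B" and B: "0 \<le> B"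
    and g: "0 \<le> \<gamma>"
  shows "\<bar>bellman \<gamma> \<pi> r' P' W x - bellman \<gamma> \<pi> r P W x\<bar> \<le> er + \<gamma> * (B * eP)"
proof -
  note b1 = bell(3,4)[OF pol P' r' rb' W Wb g, of x, OF asm_rl]
  note b2 = bell(3,4)[OF pol P r rb W Wb g, of x, OF asm_rl]
  note kf = kernel_facts[OF pol, of x, simplified]
  have eq: "bellman \<gamma> \<pi> r' P' W x - bellman \<gamma> \<pi> r P W x =
     (\<integral>a. (r' x a + \<gamma> * (\<integral>y. W y \<partial>P' x a)) - (r x a + \<gamma> * (\<integral>y. W y \<partial>P x a)) \<partial>\<pi> x)"
    (is "_ = (\<integral>a. ?f1 a - ?f2 a \<partial>\<pi> x)")
    unfolding bellman_def by (rule Bochner_Integration.integral_diff[OF b1(1) b2(1), symmetric])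
  have pt: "\<bar>(r' x a + \<gamma> * (\<integral>y. W y \<partial>P' x a)) - (r x a + \<gamma> * (\<integral>y. W y \<partial>P x a))\<bar> \<le> er + \<gamma> * (B * eP)"
    if a: "a \<in> space A" for a
  proof -
    note ps = integrand(3,4)[OF P r W Wb a, where x=x]
    note ps' = integrand(3,4)[OF P' r' W Wb a, where x=x]
    have m1: "W \<in> borel_measurable (P' x a)" using W ps'(2) by (simp cong: measurable_cong_sets)
    have "\<bar>(\<integral>y. W y \<partial>P' x a) - (\<integral>y. W y \<partial>P x a)\<bar> \<le> B * dTV (P' x a) (P x a)"
      by (rule tv_bound[OF ps'(1) ps(1)]) (use ps(2) ps'(2) m1 Wb in auto)
    also have "\<dots> \<le> B * eP" using Pp[OF a] B by (rule mult_left_mono)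
    finally have "\<gamma> * \<bar>(\<integral>y. W y \<partial>P' x a) - (\<integral>y. W y \<partial>P x a)\<bar> \<le> \<gamma> * (B * eP)" using g by (rule mult_left_mono)
    then have "\<bar>\<gamma> * ((\<integral>y. W y \<partial>P' x a) - (\<integral>y. W y \<partial>P x a))\<bar> \<le> \<gamma> * (B * eP)" by (simp add: abs_mult g)
    moreover have "\<bar>r' x a - r x a\<bar> \<le> er" using rp a .
    ultimately show ?thesis
      using abs_triangle_ineq[of "r' x a - r x a" "\<gamma> * ((\<integral>y. W y \<partial>P' x a) - (\<integral>y. W y \<partial>P x a))"]
      by (simp add: algebra_simps)
  qed
  have md: "(\<lambda>a. ?f1 a - ?f2 a) \<in> borel_measurable (\<pi> x)"
    using b1(2) b2(2) by (rule borel_measurable_diff)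
  show ?thesis unfolding eq
    by (rule abs_int_le[OF kf(1) md]) (use pt kf in auto)
qed

theorem lemma16:
  fixes \<gamma> Rmax er1 er2 eP1 eP2 :: real
    and A1 :: "'a measure" and A2 :: "'b measure"
    and \<pi>1 :: "'s::polish_space \<Rightarrow> 'a measure"
    and \<pi>2 :: "'u::polish_space \<Rightarrow> 'b measure"
    and r1 r1' :: "'s \<Rightarrow> 'a \<Rightarrow> real"
    and r2 r2' :: "'u \<Rightarrow> 'b \<Rightarrow> real"
    and P1 P1' :: "'s \<Rightarrow> 'a \<Rightarrow> 'u measure"
    and P2 P2' :: "'u \<Rightarrow> 'b \<Rightarrow> 's measure"
    and V V' :: "'s \<Rightarrow> real"
  assumes gamma: "0 < \<gamma>" "\<gamma> < 1"
    and pol1: "\<pi>1 \<in> borel \<rightarrow>\<^sub>M prob_algebra A1"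
    and pol2: "\<pi>2 \<in> borel \<rightarrow>\<^sub>M prob_algebra A2"
    and r1_meas: "(\<lambda>(x,a). r1 x a) \<in> borel_measurable (borel \<Otimes>\<^sub>M A1)"
    and r1'_meas: "(\<lambda>(x,a). r1' x a) \<in> borel_measurable (borel \<Otimes>\<^sub>M A1)"
    and r2_meas: "(\<lambda>(x,a). r2 x a) \<in> borel_measurable (borel \<Otimes>\<^sub>M A2)"
    and r2'_meas: "(\<lambda>(x,a). r2' x a) \<in> borel_measurable (borel \<Otimes>\<^sub>M A2)"
    and P1_meas: "(\<lambda>(x,a). P1 x a) \<in> borel \<Otimes>\<^sub>M A1 \<rightarrow>\<^sub>M prob_algebra borel"
    and P1'_meas: "(\<lambda>(x,a). P1' x a) \<in> borel \<Otimes>\<^sub>M A1 \<rightarrow>\<^sub>M prob_algebra borel"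
    and P2_meas: "(\<lambda>(x,a). P2 x a) \<in> borel \<Otimes>\<^sub>M A2 \<rightarrow>\<^sub>M prob_algebra borel"
    and P2'_meas: "(\<lambda>(x,a). P2' x a) \<in> borel \<Otimes>\<^sub>M A2 \<rightarrow>\<^sub>M prob_algebra borel"
    and r1_bdd: "\<And>x a. a \<in> space A1 \<Longrightarrow> \<bar>r1 x a\<bar> \<le> Rmax"
    and r1'_bdd: "\<And>x a. a \<in> space A1 \<Longrightarrow> \<bar>r1' x a\<bar> \<le> Rmax"
    and r2_bdd: "\<And>x a. a \<in> space A2 \<Longrightarrow> \<bar>r2 x a\<bar> \<le> Rmax"
    and r2'_bdd: "\<And>x a. a \<in> space A2 \<Longrightarrow> \<bar>r2' x a\<bar> \<le> Rmax"
    and r1_pert: "\<And>x a. a \<in> space A1 \<Longrightarrow> \<bar>r1' x a - r1 x a\<bar> \<le> er1"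
    and r2_pert: "\<And>x a. a \<in> space A2 \<Longrightarrow> \<bar>r2' x a - r2 x a\<bar> \<le> er2"
    and P1_pert: "\<And>x a. a \<in> space A1 \<Longrightarrow> dTV (P1' x a) (P1 x a) \<le> eP1"
    and P2_pert: "\<And>x a. a \<in> space A2 \<Longrightarrow> dTV (P2' x a) (P2 x a) \<le> eP2"
    and V_bdd: "V \<in> bdd_meas (borel :: 's measure)"
    and V_fix: "V = bellman \<gamma> \<pi>1 r1 P1 (bellman \<gamma> \<pi>2 r2 P2 V)"
    and V'_bdd: "V' \<in> bdd_meas (borel :: 's measure)"
    and V'_fix: "V' = bellman \<gamma> \<pi>1 r1' P1' (bellman \<gamma> \<pi>2 r2' P2' V')"
  shows "sup_norm (borel :: 's measure) (\<lambda>x. V' x - V x)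
           \<le> ((er1 + \<gamma> * (Rmax / (1 - \<gamma>)) * eP1)
               + \<gamma> * (er2 + \<gamma> * (Rmax / (1 - \<gamma>)) * eP2)) / (1 - \<gamma>\<^sup>2)"
proof -
  have g: "0 \<le> \<gamma>" using gamma by simp
  have g1: "\<gamma> < 1" using gamma by simp
  have ne: "space A1 \<noteq> {}"
    using kernel_facts[OF pol1, of undefined] prob_space.not_empty by fastforce
  then obtain a0 where a0: "a0 \<in> space A1" by blast
  have R0: "0 \<le> Rmax" using r1_bdd[OF a0, of undefined] by linarith
  define Vm where "Vm = Rmax / (1 - \<gamma>)"
  have Vm0: "0 \<le> Vm" unfolding Vm_def using R0 g1 by simp
  have Vm_eq: "Rmax + \<gamma> * Vm = Vm" unfolding Vm_def using g1 by (simp add: field_simps)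
  have gg: "\<gamma> * \<gamma> < 1 * 1" using gamma by (intro mult_strict_mono) auto
  have Vm_eq2: "Rmax * (1 + \<gamma>) / (1 - \<gamma>\<^sup>2) = Vm"
  proof -
    have "1 - \<gamma>\<^sup>2 = (1 - \<gamma>) * (1 + \<gamma>)" by (simp add: algebra_simps power2_eq_square)
    then show ?thesis unfolding Vm_def using gamma by simp
  qed
  have Vm: "V \<in> borel_measurable borel" "bounded (range V)" using V_bdd by (auto simp: bdd_meas_def)
  have V'm: "V' \<in> borel_measurable borel" "bounded (range V')" using V'_bdd by (auto simp: bdd_meas_def)
  obtain BV where BV: "\<And>y. \<bar>V y\<bar> \<le> BV" using Vm(2) unfolding bounded_iff by auto
  obtain BV' where BV': "\<And>y. \<bar>V' y\<bar> \<le> BV'" using V'm(2) unfolding bounded_iff by auto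
  define S' where "S' = (SUP y. \<bar>V' y\<bar>)"
  have S'u: "\<And>y. \<bar>V' y\<bar> \<le> S'" unfolding S'_def by (rule sup_upper[OF V'm(2)])
  have "\<bar>V' x\<bar> \<le> Rmax * (1 + \<gamma>) + \<gamma>\<^sup>2 * S'" for x
  proof -
    have m2: "bellman \<gamma> \<pi>2 r2' P2' V' \<in> borel_measurable borel"
      by (rule bell(1)[OF pol2 P2'_meas r2'_meas r2'_bdd V'm(1) S'u g])
    have b2: "\<And>y. \<bar>bellman \<gamma> \<pi>2 r2' P2' V' y\<bar> \<le> Rmax + \<gamma> * S'"
      by (rule bell(2)[OF pol2 P2'_meas r2'_meas r2'_bdd V'm(1) S'u g])
    have "\<bar>V' x\<bar> \<le> Rmax + \<gamma> * (Rmax + \<gamma> * S')"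
      using bell(2)[OF pol1 P1'_meas r1'_meas r1'_bdd m2 b2 g, of x] V'_fix by metis
    then show ?thesis by (simp add: algebra_simps power2_eq_square)
  qed
  then have "S' \<le> Rmax * (1 + \<gamma>) / (1 - \<gamma>\<^sup>2)" unfolding S'_def
    using gamma by (intro sup_fix[OF V'm(2)]) (use gg in \<open>auto simp: power2_eq_square\<close>)
  then have V'b: "\<And>y. \<bar>V' y\<bar> \<le> Vm" using S'u Vm_eq2 by (metis order_trans)
  define W' where "W' = bellman \<gamma> \<pi>2 r2' P2' V'"
  define W where "W = bellman \<gamma> \<pi>2 r2 P2 V'"
  define Wv where "Wv = bellman \<gamma> \<pi>2 r2 P2 V"
  have W'm: "W' \<in> borel_measurable borel" unfolding W'_def
    by (rule bell(1)[OF pol2 P2'_meas r2'_meas r2'_bdd V'm(1) V'b g])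
  have W'b: "\<And>y. \<bar>W' y\<bar> \<le> Vm" unfolding W'_def
    using bell(2)[OF pol2 P2'_meas r2'_meas r2'_bdd V'm(1) V'b g] Vm_eq by metis
  have Wm: "W \<in> borel_measurable borel" unfolding W_def
    by (rule bell(1)[OF pol2 P2_meas r2_meas r2_bdd V'm(1) V'b g])
  have Wb: "\<And>y. \<bar>W y\<bar> \<le> Vm" unfolding W_def
    using bell(2)[OF pol2 P2_meas r2_meas r2_bdd V'm(1) V'b g] Vm_eq by metis
  have Wvm: "Wv \<in> borel_measurable borel" unfolding Wv_def
    by (rule bell(1)[OF pol2 P2_meas r2_meas r2_bdd Vm(1) BV g])
  have Wvb: "\<And>y. \<bar>Wv y\<bar> \<le> Rmax + \<gamma> * BV" unfolding Wv_def
    by (rule bell(2)[OF pol2 P2_meas r2_meas r2_bdd Vm(1) BV g])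
  define D where "D = (SUP y. \<bar>V' y - V y\<bar>)"
  have bd: "bounded (range (\<lambda>y. V' y - V y))"
    unfolding bounded_iff using BV BV' by (auto intro!: exI[of _ "BV' + BV"] abs_triangle_ineq4[THEN order_trans] add_mono)
  have Du: "\<And>y. \<bar>V' y - V y\<bar> \<le> D" unfolding D_def by (rule sup_upper[OF bd])
  define e1 where "e1 = er1 + \<gamma> * (Vm * eP1)"
  define e2 where "e2 = er2 + \<gamma> * (Vm * eP2)"
  have e2b: "\<And>y. \<bar>W' y - W y\<bar> \<le> e2" unfolding W'_def W_def e2_def
    by (rule bell_pert[OF pol2 P2_meas P2'_meas r2_meas r2'_meas r2_bdd r2'_bdd r2_pert P2_pert V'm(1) V'b Vm0 g])
  have Db: "\<And>y. \<bar>W y - Wv y\<bar> \<le> \<gamma> * D" unfolding W_def Wv_def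
    by (rule bell_lip[OF pol2 P2_meas r2_meas r2_bdd V'm(1) V'b Vm(1) BV Du g])
  have pt: "\<bar>V' x - V x\<bar> \<le> (e1 + \<gamma> * e2) + \<gamma>\<^sup>2 * D" for x
  proof -
    have t1: "\<bar>bellman \<gamma> \<pi>1 r1' P1' W' x - bellman \<gamma> \<pi>1 r1 P1 W' x\<bar> \<le> e1" unfolding e1_def
      by (rule bell_pert[OF pol1 P1_meas P1'_meas r1_meas r1'_meas r1_bdd r1'_bdd r1_pert P1_pert W'm W'b Vm0 g])
    have t2: "\<bar>bellman \<gamma> \<pi>1 r1 P1 W' x - bellman \<gamma> \<pi>1 r1 P1 W x\<bar> \<le> \<gamma> * e2"
      by (rule bell_lip[OF pol1 P1_meas r1_meas r1_bdd W'm W'b Wm Wb e2b g])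
    have t3: "\<bar>bellman \<gamma> \<pi>1 r1 P1 W x - bellman \<gamma> \<pi>1 r1 P1 Wv x\<bar> \<le> \<gamma> * (\<gamma> * D)"
      by (rule bell_lip[OF pol1 P1_meas r1_meas r1_bdd Wm Wb Wvm Wvb Db g])
    have "V' x = bellman \<gamma> \<pi>1 r1' P1' W' x" unfolding W'_def using V'_fix by metis
    moreover have "V x = bellman \<gamma> \<pi>1 r1 P1 Wv x" unfolding Wv_def using V_fix by metis
    ultimately show ?thesis using t1 t2 t3 by (simp add: power2_eq_square)
  qed
  have "D \<le> (e1 + \<gamma> * e2) / (1 - \<gamma>\<^sup>2)" unfolding D_def
    using gamma by (intro sup_fix[OF bd _ _ pt[unfolded D_def]]) (use gg in \<open>auto simp: power2_eq_square\<close>)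
  then show ?thesis unfolding sup_norm_def D_def e1_def e2_def Vm_def
    by (simp add: mult.assoc)
qed

end
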